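(* Let $\widetilde{\Sigma}=\widetilde{\Sigma}_1\uplus\cdots\uplus\widetilde{\Sigma}_n$ with pairwise disjoint visibly pushdown alphabets $\widetilde{\Sigma}_i$. For any visibly pushdown contextual order $\prec$ on $\widetilde{\Sigma}$, there exists a coherent visibly pushdown contextual order $\prec'$ on $\widetilde{\Sigma}$ such that $\mathrm{red}_\prec(P_1\bowtie\cdots\bowtie P_n)=\mathrm{red}_{\prec'}(P_1\parallel\cdots\parallel P_n)$ for any well-matched languages $P_1\subseteq\widetilde{\Sigma}_1^*,\ldots,P_n\subseteq\widetilde{\Sigma}_n^*$.
   Context: A visibly pushdown (VP) alphabet is a finite alphabet partitioned into calls, returns and internals; write $\Sigma^{\mathsf{call}}_i,\Sigma^{\mathsf{ret}}_i$ for the calls and returns of $\widetilde{\Sigma}_i$; $\widetilde{\Sigma}$ has as calls/returns/internals the unions. Calls and returns in a word are matched like opening and closing parentheses (internals ignored); unmatched ones are pending; a word is well-matched if none are pending. A visibly pushdown automaton (VPA) is a pushdown automaton with bottom symbol $\bot$ that pushes one non-$\bot$ symbol on each call, pops the top on each return (reading $\bot$ on empty stack without removing it), and leaves the stack unchanged on internals; it is deterministic if it has one initial state and at most one transition per configuration and letter, and complete if it has at least one. Shuffle: $P_1\parallel\cdots\parallel P_n=\{w\in\widetilde{\Sigma}^*:\Pi_{\widetilde{\Sigma}_i}(w)\in P_i\ \forall i\}$, $\Pi_{\widetilde{\Sigma}_i}$ erasing letters outside $\widetilde{\Sigma}_i$. A word is well-nested if every matched call–return pair consists of letters from the same $\widetilde{\Sigma}_k$;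 the well-nested shuffle $P_1\bowtie\cdots\bowtie P_n$ is the set of well-nested words of $P_1\parallel\cdots\parallel P_n$. $\mathbb{I}=\{(a,b):a\in\widetilde{\Sigma}_i,b\in\widetilde{\Sigma}_j,i\ne j\}$, $\equiv_{\mathbb{I}}$ the least reflexive transitive relation with $uabv\equiv_{\mathbb{I}}ubav$ for $(a,b)\in\mathbb{I}$. A contextual order is a map $\prec$ from $\widetilde{\Sigma}^*$ to strict total orders on $\widetilde{\Sigma}$; it induces $\preceq$: $\sigma\preceq\rho$ iff $\sigma$ is a prefix of $\rho$ or $\sigma=\alpha a\beta$, $\rho=\alpha b\gamma$ with $a\prec_\alpha b$. $\mathrm{red}_\prec(L)=\{w\in L:\forall u\in L,(u\equiv_{\mathbb{I}}w\wedge u\preceq w)\Rightarrow u=w\}$. $\prec$ is visibly pushdown if there is a complete deterministic VPA $A$ over $\widetilde{\Sigma}$ and a map $\mathsf{ord}$ from its states to strict total orders on $\widetilde{\Sigma}$ with $\prec_w=\mathsf{ord}(q)$, $q$ the state reached by $A$ after reading $w$. $\prec$ is coherent if for every $u\in\widetilde{\Sigma}^*$ and every $i$: if $u$ has pending calls and the last one is in $\Sigma^{\mathsf{call}}_i$, then $a\prec_u r$ for all $a\in\widetilde{\Sigma}_i$ and $r\in\bigcup_{j\ne i}\Sigma^{\mathsf{ret}}_j$. *)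

theory Defs
  imports Main
begin

text \<open>
  The global alphabet is the whole finite type 'a.  It is partitioned
  into calls C, returns R and internals (everything else; C and R are assumed disjoint).
  The components are Comp 0, ..., Comp (n-1), pairwise disjoint and covering 'a;
  the calls/returns of component i are C \<inter> Comp i and R \<inter> Comp i.
\<close>

inductive wm :: "'a set \<Rightarrow> 'a set \<Rightarrow> 'a list \<Rightarrow> bool" for C R where
  wm_nil: "wm C R []"
| wm_int: "a \<notin> C \<Longrightarrow> a \<notin> R \<Longrightarrow> wm C R [a]"
| wm_nest: "c \<in> C \<Longrightarrow> r \<in> R \<Longrightarrow> wm C R u \<Longrightarrow> wm C R ([c] @ u @ [r])"
| wm_app: "wm C R u \<Longrightarrow> wm C R v \<Longrightarrow> wm C R (u @ v)"

definition matched :: "'a set \<Rightarrow> 'a set \<Rightarrow> 'a list \<Rightarrow> nat \<Rightarrow> nat \<Rightarrow> bool" where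
  "matched C R w i j \<longleftrightarrow> i < j \<and> j < length w \<and> w ! i \<in> C \<and> w ! j \<in> R \<and>
     wm C R (take (j - i - 1) (drop (Suc i) w))"

definition pending_call :: "'a set \<Rightarrow> 'a set \<Rightarrow> 'a list \<Rightarrow> nat \<Rightarrow> bool" where
  "pending_call C R w i \<longleftrightarrow> i < length w \<and> w ! i \<in> C \<and> \<not> (\<exists>j. matched C R w i j)"

definition pending_ret :: "'a set \<Rightarrow> 'a set \<Rightarrow> 'a list \<Rightarrow> nat \<Rightarrow> bool" where
  "pending_ret C R w j \<longleftrightarrow> j < length w \<and> w ! j \<in> R \<and> \<not> (\<exists>i. matched C R w i j)"

definition well_matched :: "'a set \<Rightarrow> 'a set \<Rightarrow> 'a list \<Rightarrow> bool" where
  "well_matched C R w \<longleftrightarrow> (\<forall>i. \<not> pending_call C R w i) \<and> (\<forall>j. \<not> pending_ret C R w j)"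

definition well_nested :: "'a set \<Rightarrow> 'a set \<Rightarrow> nat \<Rightarrow> (nat \<Rightarrow> 'a set) \<Rightarrow> 'a list \<Rightarrow> bool" where
  "well_nested C R n Comp w \<longleftrightarrow>
     (\<forall>i j. matched C R w i j \<longrightarrow> (\<exists>k<n. w ! i \<in> Comp k \<and> w ! j \<in> Comp k))"

definition proj :: "'a set \<Rightarrow> 'a list \<Rightarrow> 'a list" where
  "proj A w = filter (\<lambda>a. a \<in> A) w"

definition shuffle :: "nat \<Rightarrow> (nat \<Rightarrow> 'a set) \<Rightarrow> (nat \<Rightarrow> 'a list set) \<Rightarrow> 'a list set" where
  "shuffle n Comp P = {w. \<forall>i<n. proj (Comp i) w \<in> P i}"

definition wn_shuffle :: "'a set \<Rightarrow> 'a set \<Rightarrow> nat \<Rightarrow> (nat \<Rightarrow> 'a set) \<Rightarrow> (nat \<Rightarrow> 'a list set) \<Rightarrow> 'a list set" where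
  "wn_shuffle C R n Comp P = {w \<in> shuffle n Comp P. well_nested C R n Comp w}"

definition indep :: "nat \<Rightarrow> (nat \<Rightarrow> 'a set) \<Rightarrow> 'a \<Rightarrow> 'a \<Rightarrow> bool" where
  "indep n Comp a b \<longleftrightarrow> (\<exists>i<n. \<exists>j<n. i \<noteq> j \<and> a \<in> Comp i \<and> b \<in> Comp j)"

definition swap_step :: "nat \<Rightarrow> (nat \<Rightarrow> 'a set) \<Rightarrow> 'a list \<Rightarrow> 'a list \<Rightarrow> bool" where
  "swap_step n Comp x y \<longleftrightarrow>
     (\<exists>u a b v. indep n Comp a b \<and> x = u @ [a, b] @ v \<and> y = u @ [b, a] @ v)"

definition trace_eq :: "nat \<Rightarrow> (nat \<Rightarrow> 'a set) \<Rightarrow> 'a list \<Rightarrow> 'a list \<Rightarrow> bool" where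
  "trace_eq n Comp = (swap_step n Comp)\<^sup>*\<^sup>*"

definition strict_total :: "('a \<Rightarrow> 'a \<Rightarrow> bool) \<Rightarrow> bool" where
  "strict_total r \<longleftrightarrow> (\<forall>a. \<not> r a a) \<and> (\<forall>a b c. r a b \<longrightarrow> r b c \<longrightarrow> r a c) \<and>
     (\<forall>a b. a \<noteq> b \<longrightarrow> r a b \<or> r b a)"

definition contextual_order :: "('a list \<Rightarrow> 'a \<Rightarrow> 'a \<Rightarrow> bool) \<Rightarrow> bool" where
  "contextual_order ord \<longleftrightarrow> (\<forall>w. strict_total (ord w))"

definition ctx_le :: "('a list \<Rightarrow> 'a \<Rightarrow> 'a \<Rightarrow> bool) \<Rightarrow> 'a list \<Rightarrow> 'a list \<Rightarrow> bool" where
  "ctx_le ord s r \<longleftrightarrow> (\<exists>t. r = s @ t) \<or>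
     (\<exists>\<alpha> a b \<beta> \<gamma>. s = \<alpha> @ a # \<beta> \<and> r = \<alpha> @ b # \<gamma> \<and> ord \<alpha> a b)"

definition red :: "nat \<Rightarrow> (nat \<Rightarrow> 'a set) \<Rightarrow> ('a list \<Rightarrow> 'a \<Rightarrow> 'a \<Rightarrow> bool) \<Rightarrow> 'a list set \<Rightarrow> 'a list set" where
  "red n Comp ord L = {w \<in> L. \<forall>u \<in> L. (trace_eq n Comp u w \<and> ctx_le ord u w) \<longrightarrow> u = w}"

text \<open>The stack is a list of (non-bottom) symbols; the empty list means only the bottom
  symbol is present, in which case a return reads the bottom symbol (None) and leaves it.\<close>
definition vpa_step :: "'a set \<Rightarrow> 'a set \<Rightarrow> (nat \<Rightarrow> 'a \<Rightarrow> nat \<times> nat) \<Rightarrow>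
    (nat \<Rightarrow> nat option \<Rightarrow> 'a \<Rightarrow> nat) \<Rightarrow> (nat \<Rightarrow> 'a \<Rightarrow> nat) \<Rightarrow>
    nat \<times> nat list \<Rightarrow> 'a \<Rightarrow> nat \<times> nat list" where
  "vpa_step C R dc dr di cfg a =
     (let q = fst cfg; st = snd cfg in
      if a \<in> C then (fst (dc q a), snd (dc q a) # st)
      else if a \<in> R then (case st of [] \<Rightarrow> (dr q None a, [])
                                   | g # st' \<Rightarrow> (dr q (Some g) a, st'))
      else (di q a, st))"

definition vpa_run :: "'a set \<Rightarrow> 'a set \<Rightarrow> (nat \<Rightarrow> 'a \<Rightarrow> nat \<times> nat) \<Rightarrow>
    (nat \<Rightarrow> nat option \<Rightarrow> 'a \<Rightarrow> nat) \<Rightarrow> (nat \<Rightarrow> 'a \<Rightarrow> nat) \<Rightarrow>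
    nat \<times> nat list \<Rightarrow> 'a list \<Rightarrow> nat \<times> nat list" where
  "vpa_run C R dc dr di cfg w = foldl (vpa_step C R dc dr di) cfg w"

definition vp_order :: "'a set \<Rightarrow> 'a set \<Rightarrow> ('a list \<Rightarrow> 'a \<Rightarrow> 'a \<Rightarrow> bool) \<Rightarrow> bool" where
  "vp_order C R ord \<longleftrightarrow>
     (\<exists>(Q :: nat set) (\<Gamma> :: nat set) q0 dc dr di (f :: nat \<Rightarrow> 'a \<Rightarrow> 'a \<Rightarrow> bool).
        finite Q \<and> finite \<Gamma> \<and> q0 \<in> Q \<and>
        (\<forall>q\<in>Q. \<forall>a. fst (dc q a) \<in> Q \<and> snd (dc q a) \<in> \<Gamma>) \<and>
        (\<forall>q\<in>Q. \<forall>a. dr q None a \<in> Q \<and> (\<forall>g\<in>\<Gamma>. dr q (Some g) a \<in> Q)) \<and>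
        (\<forall>q\<in>Q. \<forall>a. di q a \<in> Q) \<and>
        (\<forall>q\<in>Q. strict_total (f q)) \<and>
        (\<forall>w. ord w = f (fst (vpa_run C R dc dr di (q0, []) w))))"

definition coherent :: "'a set \<Rightarrow> 'a set \<Rightarrow> nat \<Rightarrow> (nat \<Rightarrow> 'a set) \<Rightarrow>
    ('a list \<Rightarrow> 'a \<Rightarrow> 'a \<Rightarrow> bool) \<Rightarrow> bool" where
  "coherent C R n Comp ord \<longleftrightarrow>
     (\<forall>u i. i < n \<longrightarrow> (\<exists>k. pending_call C R u k) \<longrightarrow>
        u ! (GREATEST k. pending_call C R u k) \<in> C \<inter> Comp i \<longrightarrow>
        (\<forall>a \<in> Comp i. \<forall>r. (\<exists>j<n. j \<noteq> i \<and> r \<in> R \<inter> Comp j) \<longrightarrow> ord u a r))"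

end

theory Submission
  imports Defs
begin


definition wt :: "'a set \<Rightarrow> 'a set \<Rightarrow> 'a \<Rightarrow> int" where
  "wt C R a = (if a \<in> C then 1 else if a \<in> R then -1 else 0)"

definition ht :: "'a set \<Rightarrow> 'a set \<Rightarrow> 'a list \<Rightarrow> int" where
  "ht C R xs = sum_list (map (wt C R) xs)"

lemma ht_Nil[simp]: "ht C R [] = 0" by (simp add: ht_def)
lemma ht_Cons[simp]: "ht C R (a # xs) = wt C R a + ht C R xs" by (simp add: ht_def)
lemma ht_append[simp]: "ht C R (xs @ ys) = ht C R xs + ht C R ys" by (simp add: ht_def)

lemma ht_take_Suc: "m < length xs \<Longrightarrow> ht C R (take (Suc m) xs) = ht C R (take m xs) + wt C R (xs ! m)"
  by (simp add: take_Suc_conv_app_nth)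

lemma ht_take_add: "ht C R (take (a + b) xs) = ht C R (take a xs) + ht C R (take b (drop a xs))"
  by (simp add: take_add)

lemma wt_cases: "wt C R a = 1 \<or> wt C R a = 0 \<or> wt C R a = -1"
  by (simp add: wt_def)

lemma wt_one: "wt C R a = 1 \<longleftrightarrow> a \<in> C" by (simp add: wt_def)
lemma wt_m1: "wt C R a = -1 \<longleftrightarrow> a \<notin> C \<and> a \<in> R" by (simp add: wt_def)

definition bal :: "'a set \<Rightarrow> 'a set \<Rightarrow> 'a list \<Rightarrow> bool" where
  "bal C R v \<longleftrightarrow> ht C R v = 0 \<and> (\<forall>m. ht C R (take m v) \<ge> 0)"

lemma wm_bal: assumes CR: "C \<inter> R = {}" and w: "wm C R v" shows "bal C R v"
  using w
proof (induction rule: wm.induct)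
  case wm_nil then show ?case by (simp add: bal_def)
next
  case (wm_int a) then show ?case by (simp add: bal_def wt_def take_Cons')
next
  case (wm_nest c r u)
  have wc: "wt C R c = 1" "wt C R r = -1" using wm_nest CR by (auto simp: wt_def)
  show ?case unfolding bal_def
  proof (intro conjI allI)
    show "ht C R ([c] @ u @ [r]) = 0" using wm_nest wc by (simp add: bal_def)
    fix m
    show "0 \<le> ht C R (take m ([c] @ u @ [r]))"
    proof (cases m)
      case 0 then show ?thesis by simp
    next
      case (Suc k)
      then show ?thesis using wm_nest.IH wc
        by (cases "k \<le> length u") (auto simp: bal_def take_Cons' )
    qed
  qed
next
  case (wm_app u v)
  show ?case unfolding bal_def
  proof (intro conjI allI)
    show "ht C R (u @ v) = 0" using wm_app by (simp add: bal_def)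
    fix m
    show "0 \<le> ht C R (take m (u @ v))"
      using wm_app by (cases "m \<le> length u") (auto simp: bal_def)
  qed
qed

lemma bal_wm: "bal C R v \<Longrightarrow> wm C R v"
proof (induction "length v" arbitrary: v rule: less_induct)
  case less
  show ?case
  proof (cases v)
    case Nil then show ?thesis by (simp add: wm_nil)
  next
    case (Cons a v')
    have b0: "ht C R v = 0" and b1: "\<And>m. ht C R (take m v) \<ge> 0" using less.prems by (auto simp: bal_def)
    have t1: "wt C R a \<ge> 0" using b1[of 1] Cons by simp
    show ?thesis
    proof (cases "a \<in> C")
      case False
      then have "a \<notin> R" "wt C R a = 0" using t1 by (auto simp: wt_def split: if_splits)
      have "bal C R v'" unfolding bal_def
      proof (intro conjI allI)
        show "ht C R v' = 0" using b0 Cons \<open>wt C R a = 0\<close> by simp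
        fix m show "0 \<le> ht C R (take m v')" using b1[of "Suc m"] Cons \<open>wt C R a = 0\<close> by simp
      qed
      then have "wm C R v'" using less.hyps Cons by simp
      then have "wm C R ([a] @ v')" using False \<open>a \<notin> R\<close> by (intro wm_app wm_int)
      then show ?thesis using Cons by simp
    next
      case True
      then have wa: "wt C R a = 1" by (simp add: wt_def)
      have hv': "ht C R v' = -1" using b0 Cons wa by simp
      define m where "m = (LEAST m. ht C R (take m v') < 0)"
      have ex: "ht C R (take (length v') v') < 0" using hv' by simp
      have m1: "ht C R (take m v') < 0" unfolding m_def by (rule LeastI, rule ex)
      have m2: "\<And>k. k < m \<Longrightarrow> ht C R (take k v') \<ge> 0" unfolding m_def using not_less_Least by fastforce
      have mle: "m \<le> length v'" unfolding m_def by (rule Least_le, rule ex)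
      have mpos: "m \<noteq> 0" using m1 by (cases m) auto
      then obtain j where j: "m = Suc j" by (cases m) auto
      have jl: "j < length v'" using mle j by simp
      have hj: "ht C R (take j v') \<ge> 0" using m2 j by simp
      have step: "ht C R (take m v') = ht C R (take j v') + wt C R (v' ! j)" using ht_take_Suc[OF jl] j by simp
      have wj: "wt C R (v' ! j) = -1" and hj0: "ht C R (take j v') = 0"
        using step m1 hj wt_cases[of C R "v' ! j"] by auto
      have rR: "v' ! j \<in> R" "v' ! j \<notin> C" using wj by (auto simp: wt_m1)
      define x where "x = take j v'"
      define y where "y = drop m v'"
      have v'eq: "v' = x @ [v' ! j] @ y" unfolding x_def y_def j using jl
        by (simp add: id_take_nth_drop[symmetric])
      have lx: "length x = j" using jl x_def by simp
      have balx: "bal C R x" unfolding bal_def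
      proof (intro conjI allI)
        show "ht C R x = 0" using hj0 x_def by simp
        fix k show "0 \<le> ht C R (take k x)"
        proof (cases "k \<le> j")
          case True then show ?thesis using m2[of k] j x_def by (simp add: min_def)
        next
          case False then show ?thesis using hj0 x_def by simp
        qed
      qed
      have baly: "bal C R y" unfolding bal_def
      proof (intro conjI allI)
        show "ht C R y = 0" using hv' v'eq hj0 x_def wj by (metis add.right_neutral add_left_cancel ht_Cons ht_append append_Cons append_Nil ht_Nil)
        fix k
        have "ht C R (take (Suc (m + k)) v) \<ge> 0" using b1 by blast
        then have "ht C R (take (m + k) v') \<ge> -1" using Cons wa by simp
        moreover have "ht C R (take (m + k) v') = ht C R (take m v') + ht C R (take k y)"
          unfolding y_def by (rule ht_take_add)
        moreover have "ht C R (take m v') = -1" using step wj hj0 by simp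
        ultimately show "0 \<le> ht C R (take k y)" by simp
      qed
      have "wm C R x" using less.hyps balx Cons v'eq by (metis add_Suc_right le_add1 le_imp_less_Suc length_Cons length_append)
      moreover have "wm C R y"
      proof -
        have "length y < length v" using Cons arg_cong[OF v'eq, of length] by simp
        then show ?thesis using less.hyps baly by blast
      qed
      ultimately have "wm C R (([a] @ x @ [v' ! j]) @ y)" using True rR by (intro wm_app wm_nest)
      then show ?thesis using Cons v'eq by simp
    qed
  qed
qed

lemma wm_iff_bal: "C \<inter> R = {} \<Longrightarrow> wm C R v \<longleftrightarrow> bal C R v"
  using wm_bal bal_wm by blast



lemma matched_bal: "C \<inter> R = {} \<Longrightarrow> matched C R w i j \<longleftrightarrow> i < j \<and> j < length w \<and> w ! i \<in> C \<and> w ! j \<in> R \<and>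
   bal C R (take (j - i - 1) (drop (Suc i) w))"
  unfolding matched_def using wm_iff_bal by blast

lemma ht_factor: "k \<le> j - i - 1 \<Longrightarrow>
  ht C R (take k (take (j - i - 1) (drop (Suc i) w))) = ht C R (take (Suc i + k) w) - ht C R (take (Suc i) w)"
  using ht_take_add[of C R "Suc i" k w] by (simp add: min_def)

lemma matched_H:
  assumes CR: "C \<inter> R = {}" and m: "matched C R w i j"
  shows "ht C R (take (Suc i) w) = ht C R (take i w) + 1"
    "ht C R (take j w) = ht C R (take (Suc i) w)"
    "ht C R (take (Suc j) w) = ht C R (take j w) - 1"
    "\<And>m. Suc i \<le> m \<Longrightarrow> m \<le> j \<Longrightarrow> ht C R (take m w) \<ge> ht C R (take (Suc i) w)"
proof -
  have mb: "i < j" "j < length w" "w ! i \<in> C" "w ! j \<in> R" "bal C R (take (j - i - 1) (drop (Suc i) w))"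
    using matched_bal[OF CR] m by auto
  show "ht C R (take (Suc i) w) = ht C R (take i w) + 1"
    using ht_take_Suc[of i w C R] mb by (simp add: wt_def)
  show "ht C R (take (Suc j) w) = ht C R (take j w) - 1"
    using ht_take_Suc[of j w C R] mb CR by (auto simp: wt_def)
  have "ht C R (take (j - i - 1) (take (j - i - 1) (drop (Suc i) w))) = 0" using mb(5) by (simp add: bal_def)
  then show "ht C R (take j w) = ht C R (take (Suc i) w)"
    using ht_factor[of "j - i - 1" j i C R w] mb(1) by simp
  fix m assume "Suc i \<le> m" "m \<le> j"
  then show "ht C R (take m w) \<ge> ht C R (take (Suc i) w)"
  proof -
    have k: "m - Suc i \<le> j - i - 1" "Suc i + (m - Suc i) = m" using \<open>Suc i \<le> m\<close> \<open>m \<le> j\<close> by arith+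
    show ?thesis using ht_factor[OF k(1), of C R w] k(2) mb(5) unfolding bal_def by (metis diff_ge_0_iff_ge)
  qed
qed

lemma matched_of_H:
  assumes CR: "C \<inter> R = {}" and ij: "i < j" "j < length w" "w ! i \<in> C" "w ! j \<in> R"
    and hj: "ht C R (take j w) = ht C R (take (Suc i) w)"
    and hm: "\<And>m. Suc i \<le> m \<Longrightarrow> m \<le> j \<Longrightarrow> ht C R (take m w) \<ge> ht C R (take (Suc i) w)"
  shows "matched C R w i j"
proof -
  have "bal C R (take (j - i - 1) (drop (Suc i) w))" unfolding bal_def
  proof (intro conjI allI)
    show "ht C R (take (j - i - 1) (drop (Suc i) w)) = 0"
      using ht_factor[of "j - i - 1" j i C R w] hj ij by simp
    fix k
    show "0 \<le> ht C R (take k (take (j - i - 1) (drop (Suc i) w)))"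
    proof (cases "k \<le> j - i - 1")
      case True then show ?thesis using ht_factor[of k j i C R w] hm[of "Suc i + k"] ij by simp
    next
      case False then show ?thesis using ht_factor[of "j - i - 1" j i C R w] hj ij by simp
    qed
  qed
  then show ?thesis using matched_bal[OF CR] ij by blast
qed

lemma matched_unique:
  assumes CR: "C \<inter> R = {}" and m1: "matched C R w i j" and m2: "matched C R w i j'"
  shows "j = j'"
proof (rule ccontr)
  assume "j \<noteq> j'"
  then consider "j < j'" | "j' < j" by linarith
  then show False
  proof cases
    case 1
    have "Suc j \<le> j'" "Suc i \<le> Suc j" using 1 m1 by (auto simp: matched_def)
    then show False using matched_H[OF CR m1] matched_H(4)[OF CR m2, of "Suc j"] by simp
  next
    case 2
    have "Suc j' \<le> j" "Suc i \<le> Suc j'" using 2 m2 by (auto simp: matched_def)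
    then show False using matched_H[OF CR m2] matched_H(4)[OF CR m1, of "Suc j'"] by simp
  qed
qed

lemma pending_iff:
  assumes CR: "C \<inter> R = {}"
  shows "pending_call C R w i \<longleftrightarrow> i < length w \<and> w ! i \<in> C \<and>
    (\<forall>m. i < m \<and> m \<le> length w \<longrightarrow> ht C R (take m w) \<ge> ht C R (take (Suc i) w))"
proof
  assume p: "pending_call C R w i"
  then have il: "i < length w" "w ! i \<in> C" and nm: "\<And>j. \<not> matched C R w i j" by (auto simp: pending_call_def)
  show "i < length w \<and> w ! i \<in> C \<and>
    (\<forall>m. i < m \<and> m \<le> length w \<longrightarrow> ht C R (take m w) \<ge> ht C R (take (Suc i) w))"
  proof (intro conjI il allI impI, rule ccontr)
    fix m assume mm: "i < m \<and> m \<le> length w" and lt: "\<not> ht C R (take m w) \<ge> ht C R (take (Suc i) w)"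
    define m0 where "m0 = (LEAST m. i < m \<and> m \<le> length w \<and> ht C R (take m w) < ht C R (take (Suc i) w))"
    have P: "i < m0 \<and> m0 \<le> length w \<and> ht C R (take m0 w) < ht C R (take (Suc i) w)"
      unfolding m0_def by (rule LeastI[of _ m]) (use mm lt in auto)
    have Q: "\<And>k. i < k \<Longrightarrow> k \<le> length w \<Longrightarrow> k < m0 \<Longrightarrow> ht C R (take k w) \<ge> ht C R (take (Suc i) w)"
      unfolding m0_def using not_less_Least by fastforce
    have "m0 \<noteq> Suc i" using P by auto
    then obtain j where j: "m0 = Suc j" "Suc i \<le> j" using P by (cases m0) auto
    have jl: "j < length w" using P j by simp
    have hj: "ht C R (take j w) \<ge> ht C R (take (Suc i) w)" using Q[of j] j jl by simp
    have st: "ht C R (take m0 w) = ht C R (take j w) + wt C R (w ! j)" using ht_take_Suc[OF jl] j by simp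
    have wj: "wt C R (w ! j) = -1" and hj': "ht C R (take j w) = ht C R (take (Suc i) w)"
      using st P hj wt_cases[of C R "w ! j"] by auto
    have "matched C R w i j"
      apply (rule matched_of_H[OF CR])
      using j jl il wj hj' Q by (auto simp: wt_m1)
    then show False using nm by blast
  qed
next
  assume r: "i < length w \<and> w ! i \<in> C \<and>
    (\<forall>m. i < m \<and> m \<le> length w \<longrightarrow> ht C R (take m w) \<ge> ht C R (take (Suc i) w))"
  show "pending_call C R w i" unfolding pending_call_def
  proof (intro conjI notI)
    show "i < length w" "w ! i \<in> C" using r by auto
    assume "\<exists>j. matched C R w i j"
    then obtain j where mj: "matched C R w i j" by blast
    have "j < length w" "i < j" using mj by (auto simp: matched_def)
    then have "ht C R (take (Suc j) w) \<ge> ht C R (take (Suc i) w)" using r by auto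
    then show False using matched_H[OF CR mj] by simp
  qed
qed

lemma pending_above:
  assumes CR: "C \<inter> R = {}" and k: "k \<le> length w" and h: "ht C R w > ht C R (take k w)"
  shows "\<exists>m\<ge>k. pending_call C R w m"
proof -
  define m where "m = (GREATEST m. m \<le> length w \<and> ht C R (take m w) \<le> ht C R (take k w))"
  have P: "m \<le> length w \<and> ht C R (take m w) \<le> ht C R (take k w)"
    unfolding m_def by (rule GreatestI_nat[of _ k "length w"]) (use k in auto)
  have km: "k \<le> m" unfolding m_def by (rule Greatest_le_nat[of _ k "length w"]) (use k in auto)
  have G: "\<And>m'. m' \<le> length w \<Longrightarrow> m < m' \<Longrightarrow> ht C R (take m' w) > ht C R (take k w)"
  proof (rule ccontr)
    fix m' assume "m' \<le> length w" "m < m'" "\<not> ht C R (take m' w) > ht C R (take k w)"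
    then have "m' \<le> m" unfolding m_def by (intro Greatest_le_nat[of _ m' "length w"]) auto
    then show False using \<open>m < m'\<close> by simp
  qed
  have ml: "m < length w" using P h by (cases "m = length w") auto
  have "ht C R (take (Suc m) w) > ht C R (take k w)" using G[of "Suc m"] ml by simp
  then have w1: "wt C R (w ! m) = 1" using ht_take_Suc[OF ml] P wt_cases[of C R "w ! m"] by auto
  have "pending_call C R w m"
    unfolding pending_iff[OF CR]
  proof (intro conjI ml allI impI)
    show "w ! m \<in> C" using w1 by (simp add: wt_one)
    fix m' assume "m < m' \<and> m' \<le> length w"
    then show "ht C R (take (Suc m) w) \<le> ht C R (take m' w)"
      using G[of m'] ht_take_Suc[OF ml] w1 P by simp
  qed
  then show ?thesis using km by blast
qed

lemma pending_lt: "pending_call C R w k \<Longrightarrow> k < length w"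
  by (simp add: pending_call_def)

lemma pending_snoc_last: "pending_call C R (u @ [a]) (length u) \<longleftrightarrow> a \<in> C"
proof
  assume "pending_call C R (u @ [a]) (length u)" then show "a \<in> C" by (simp add: pending_call_def)
next
  assume a: "a \<in> C"
  show "pending_call C R (u @ [a]) (length u)" unfolding pending_call_def
    using a by (auto simp: matched_def)
qed

lemma pending_snoc:
  assumes CR: "C \<inter> R = {}" and k: "k < length u"
  shows "pending_call C R (u @ [a]) k \<longleftrightarrow> pending_call C R u k \<and>
      ht C R u + wt C R a \<ge> ht C R (take (Suc k) u)"
proof -
  have tk: "\<And>m. m \<le> length u \<Longrightarrow> take m (u @ [a]) = take m u" by simp
  have tS: "take (Suc k) (u @ [a]) = take (Suc k) u" using k by simp
  have nth: "(u @ [a]) ! k = u ! k" using k by (simp add: nth_append)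
  show ?thesis
    unfolding pending_iff[OF CR] tS nth
  proof safe
    fix m assume "\<forall>m. k < m \<and> m \<le> length (u @ [a]) \<longrightarrow> ht C R (take (Suc k) u) \<le> ht C R (take m (u @ [a]))"
      "k < m" "m \<le> length u"
    moreover have "m \<le> length (u @ [a])" using \<open>m \<le> length u\<close> by simp
    ultimately show "ht C R (take (Suc k) u) \<le> ht C R (take m u)" using tk[of m] by auto
  next
    assume "\<forall>m. k < m \<and> m \<le> length (u @ [a]) \<longrightarrow> ht C R (take (Suc k) u) \<le> ht C R (take m (u @ [a]))"
    then have "ht C R (take (Suc k) u) \<le> ht C R (take (Suc (length u)) (u @ [a]))" using k
      by (metis length_append_singleton less_SucI order.refl)
    then show "ht C R (take (Suc k) u) \<le> ht C R u + wt C R a" by simp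
  next
    fix m assume A: "\<forall>m. k < m \<and> m \<le> length u \<longrightarrow> ht C R (take (Suc k) u) \<le> ht C R (take m u)"
      "ht C R (take (Suc k) u) \<le> ht C R u + wt C R a" "k < m" "m \<le> length (u @ [a])"
    show "ht C R (take (Suc k) u) \<le> ht C R (take m (u @ [a]))"
    proof (cases "m \<le> length u")
      case True then show ?thesis using A tk by simp
    next
      case False then have "m = Suc (length u)" using A by simp
      then show ?thesis using A by simp
    qed
  qed (use k in auto)
qed



fun psr :: "'a set \<Rightarrow> 'a set \<Rightarrow> 'a list \<Rightarrow> nat list" where
  "psr C R [] = []"
| "psr C R (a # r) = (if a \<in> C then length r # psr C R r else if a \<in> R then tl (psr C R r) else psr C R r)"

definition ps :: "'a set \<Rightarrow> 'a set \<Rightarrow> 'a list \<Rightarrow> nat list" where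
  "ps C R u = psr C R (rev u)"

lemma ps_Nil[simp]: "ps C R [] = []" by (simp add: ps_def)

lemma ps_snoc: "ps C R (u @ [a]) = (if a \<in> C then length u # ps C R u else if a \<in> R then tl (ps C R u) else ps C R u)"
  by (simp add: ps_def)

lemma top_height:
  assumes CR: "C \<inter> R = {}" and pk: "pending_call C R u p" and mx: "\<And>k. pending_call C R u k \<Longrightarrow> k \<le> p"
  shows "ht C R u = ht C R (take (Suc p) u)"
proof -
  have pl: "p < length u" using pk by (simp add: pending_call_def)
  have ge: "ht C R u \<ge> ht C R (take (Suc p) u)" using pk pl unfolding pending_iff[OF CR] by (metis order.refl take_all)
  have "\<not> ht C R u > ht C R (take (Suc p) u)"
  proof
    assume "ht C R u > ht C R (take (Suc p) u)"
    then obtain m where "m \<ge> Suc p" "pending_call C R u m" using pending_above[OF CR, of "Suc p" u] pl by auto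
    then show False using mx by fastforce
  qed
  then show ?thesis using ge by simp
qed

lemma ps_pending:
  assumes CR: "C \<inter> R = {}"
  shows "set (ps C R u) = {k. pending_call C R u k} \<and> sorted_wrt (>) (ps C R u)"
proof (induction u rule: rev_induct)
  case Nil then show ?case by (simp add: pending_call_def)
next
  case (snoc a u)
  have IH1: "\<And>k. k \<in> set (ps C R u) \<longleftrightarrow> pending_call C R u k" using snoc by auto
  have IH2: "sorted_wrt (>) (ps C R u)" using snoc by auto
  have lt: "\<And>k. k \<in> set (ps C R u) \<Longrightarrow> k < length u" using IH1 pending_lt by blast
  have big: "\<And>k. pending_call C R (u @ [a]) k \<Longrightarrow> k \<le> length u" using pending_lt by fastforce
  show ?case
  proof (cases "a \<in> C")
    case True
    have "\<And>k. pending_call C R (u @ [a]) k \<longleftrightarrow> k = length u \<or> pending_call C R u k"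
    proof -
      fix k
      show "pending_call C R (u @ [a]) k \<longleftrightarrow> k = length u \<or> pending_call C R u k"
      proof (cases "k < length u")
        case True
        have "pending_call C R u k \<Longrightarrow> ht C R u \<ge> ht C R (take (Suc k) u)"
          using True unfolding pending_iff[OF CR] by (metis order.refl take_all)
        then show ?thesis using pending_snoc[OF CR True, of a] True \<open>a \<in> C\<close> by (auto simp: wt_def)
      next
        case False
        then show ?thesis using pending_snoc_last[of C R u a] \<open>a \<in> C\<close> big[of k] pending_lt[of C R u k] by fastforce
      qed
    qed
    then show ?thesis using True IH1 IH2 lt by (auto simp: ps_snoc)
  next
    case aC: False
    show ?thesis
    proof (cases "a \<in> R")
      case False
      have "\<And>k. pending_call C R (u @ [a]) k \<longleftrightarrow> pending_call C R u k"
      proof -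
        fix k
        show "pending_call C R (u @ [a]) k \<longleftrightarrow> pending_call C R u k"
        proof (cases "k < length u")
          case True
          have "pending_call C R u k \<Longrightarrow> ht C R u \<ge> ht C R (take (Suc k) u)"
            using True unfolding pending_iff[OF CR] by (metis order.refl take_all)
          then show ?thesis using pending_snoc[OF CR True, of a] aC False by (auto simp: wt_def)
        next
          case F: False
          then show ?thesis using pending_snoc_last[of C R u a] aC big[of k] pending_lt[of C R u k] by fastforce
        qed
      qed
      then show ?thesis using aC False IH1 IH2 by (auto simp: ps_snoc)
    next
      case aR: True
      have wa: "wt C R a = -1" using aC aR by (simp add: wt_def)
      show ?thesis
      proof (cases "ps C R u")
        case Nil
        then have "\<And>k. \<not> pending_call C R (u @ [a]) k"
          using IH1 pending_snoc[OF CR, of _ u a] pending_snoc_last[of C R u a] aC big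
          by (metis empty_iff le_neq_implies_less list.set(1))
        then show ?thesis using Nil aC aR by (simp add: ps_snoc)
      next
        case (Cons p ks)
        have pp: "pending_call C R u p" using IH1[of p] Cons by simp
        have ks: "\<And>k. k \<in> set ks \<Longrightarrow> k < p" using IH2 Cons by simp
        have mx: "\<And>k. pending_call C R u k \<Longrightarrow> k \<le> p" using IH1 Cons ks by fastforce
        have pl: "p < length u" using pp pending_lt by blast
        have top: "ht C R u = ht C R (take (Suc p) u)" by (rule top_height[OF CR pp mx])
        have "\<And>k. pending_call C R (u @ [a]) k \<longleftrightarrow> k \<in> set ks"
        proof -
          fix k
          show "pending_call C R (u @ [a]) k \<longleftrightarrow> k \<in> set ks"
          proof (cases "k < length u")
            case kl: True
            show ?thesis
            proof
              assume "pending_call C R (u @ [a]) k"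
              then have "pending_call C R u k" "ht C R u - 1 \<ge> ht C R (take (Suc k) u)"
                using pending_snoc[OF CR kl, of a] wa by auto
              then have "k \<noteq> p" using top by auto
              then show "k \<in> set ks" using IH1[of k] Cons \<open>pending_call C R u k\<close> by auto
            next
              assume kk: "k \<in> set ks"
              then have pk: "pending_call C R u k" and kp: "k < p" using IH1 Cons ks by auto
              have "ht C R (take p u) \<ge> ht C R (take (Suc k) u)"
                using pk kp pl unfolding pending_iff[OF CR] by auto
              moreover have "ht C R (take (Suc p) u) = ht C R (take p u) + 1"
                using ht_take_Suc[OF pl, of C R] pp by (simp add: pending_call_def wt_def)
              ultimately show "pending_call C R (u @ [a]) k"
                using pending_snoc[OF CR kl, of a] wa pk top by auto
            qed
          next
            case False
            then show ?thesis using pending_snoc_last[of C R u a] aC big[of k] lt Cons by fastforce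
          qed
        qed
        then show ?thesis using Cons aC aR IH2 by (auto simp: ps_snoc)
      qed
    qed
  qed
qed

lemma ps_hd:
  assumes CR: "C \<inter> R = {}" and ps: "ps C R u = p # rest"
  shows "pending_call C R u p" "\<And>k. pending_call C R u k \<Longrightarrow> k \<le> p"
  using ps_pending[OF CR, of u] ps by fastforce+

lemma ps_Nil_iff:
  assumes CR: "C \<inter> R = {}"
  shows "ps C R u = [] \<longleftrightarrow> \<not> (\<exists>k. pending_call C R u k)"
  using ps_pending[OF CR, of u] by auto

lemma ps_greatest:
  assumes CR: "C \<inter> R = {}" and ps: "ps C R u = p # rest"
  shows "(GREATEST k. pending_call C R u k) = p"
  using ps_hd[OF CR ps] by (intro Greatest_equality) auto

lemma matched_top:
  assumes CR: "C \<inter> R = {}" and ps: "ps C R \<alpha> = p # rest" and b: "b \<in> R"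
  shows "matched C R (\<alpha> @ b # \<gamma>) p (length \<alpha>)"
proof -
  have pp: "pending_call C R \<alpha> p" and mx: "\<And>k. pending_call C R \<alpha> k \<Longrightarrow> k \<le> p" using ps_hd[OF CR ps] by auto
  have pl: "p < length \<alpha>" using pp pending_lt by blast
  have top: "ht C R \<alpha> = ht C R (take (Suc p) \<alpha>)" by (rule top_height[OF CR pp mx])
  have tk: "\<And>m. m \<le> length \<alpha> \<Longrightarrow> take m (\<alpha> @ b # \<gamma>) = take m \<alpha>" by simp
  show ?thesis
  proof (rule matched_of_H[OF CR])
    show "p < length \<alpha>" by (rule pl)
    show "length \<alpha> < length (\<alpha> @ b # \<gamma>)" by simp
    show "(\<alpha> @ b # \<gamma>) ! p \<in> C" using pp pl by (simp add: pending_call_def nth_append)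
    show "(\<alpha> @ b # \<gamma>) ! length \<alpha> \<in> R" using b by simp
    show "ht C R (take (length \<alpha>) (\<alpha> @ b # \<gamma>)) = ht C R (take (Suc p) (\<alpha> @ b # \<gamma>))"
      using top pl tk[of "Suc p"] by simp
    fix m assume "Suc p \<le> m" "m \<le> length \<alpha>"
    then show "ht C R (take (Suc p) (\<alpha> @ b # \<gamma>)) \<le> ht C R (take m (\<alpha> @ b # \<gamma>))"
      using pp pl tk unfolding pending_iff[OF CR] by auto
  qed
qed

lemma matched_ps:
  assumes CR: "C \<inter> R = {}" and m: "matched C R w p q"
  shows "\<exists>rest. ps C R (take q w) = p # rest"
proof -
  have pq: "p < q" "q < length w" "w ! p \<in> C" using m by (auto simp: matched_def)
  have tk: "\<And>m. m \<le> q \<Longrightarrow> take m (take q w) = take m w" by (simp add: min_def)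
  have lq: "length (take q w) = q" using pq by simp
  have pp: "pending_call C R (take q w) p"
    unfolding pending_iff[OF CR] lq
  proof (intro conjI allI impI)
    show "p < q" by (rule pq)
    show "take q w ! p \<in> C" using pq by simp
    fix m assume "p < m \<and> m \<le> q"
    then show "ht C R (take (Suc p) (take q w)) \<le> ht C R (take m (take q w))"
      using matched_H(4)[OF CR m, of m] tk[of m] tk[of "Suc p"] by simp
  qed
  have mx: "\<And>k. pending_call C R (take q w) k \<Longrightarrow> k \<le> p"
  proof (rule ccontr)
    fix k assume pk: "pending_call C R (take q w) k" and "\<not> k \<le> p"
    then have kq: "k < q" "p < k" using pending_lt[OF pk] lq by auto
    have c: "w ! k \<in> C" using pk kq by (simp add: pending_call_def)
    have "ht C R (take k w) \<ge> ht C R (take (Suc p) w)" using matched_H(4)[OF CR m, of k] kq by simp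
    moreover have "ht C R (take (Suc k) w) = ht C R (take k w) + 1"
      using ht_take_Suc[of k w C R] kq pq c by (simp add: wt_def)
    moreover have "ht C R (take q w) \<ge> ht C R (take (Suc k) w)"
      using pk kq tk[of q] tk[of "Suc k"] unfolding pending_iff[OF CR] lq by auto
    ultimately show False using matched_H(2)[OF CR m] by simp
  qed
  obtain h rest where hr: "ps C R (take q w) = h # rest"
    using ps_Nil_iff[OF CR, of "take q w"] pp by (cases "ps C R (take q w)") auto
  have "h \<le> p" using ps_hd[OF CR hr] mx by blast
  moreover have "p \<le> h" using ps_hd[OF CR hr] pp by blast
  ultimately show ?thesis using hr by auto
qed

lemma matched_shift:
  assumes "matched C R y a b"
  shows "matched C R (x @ y @ z) (length x + a) (length x + b)"
proof -
  have ab: "a < b" "b < length y" using assms by (auto simp: matched_def)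
  have "take (b - a - 1) (drop (Suc (length x + a)) (x @ y @ z)) = take (b - a - 1) (drop (Suc a) y)"
    using ab by simp
  then show ?thesis using assms ab unfolding matched_def by (simp add: nth_append)
qed

lemma matched_prefix: "matched C R u i j \<Longrightarrow> matched C R (u @ v) i j"
  using matched_shift[of C R u i j "[]" v] by simp

lemma well_matched_bal:
  assumes CR: "C \<inter> R = {}" and wm: "well_matched C R v"
  shows "bal C R v"
proof -
  have pos: "\<And>m. ht C R (take m v) \<ge> 0"
  proof (rule ccontr)
    fix m assume "\<not> ht C R (take m v) \<ge> 0"
    define m0 where "m0 = (LEAST m. ht C R (take m v) < 0)"
    have P: "ht C R (take m0 v) < 0" unfolding m0_def by (rule LeastI[of _ m]) (use \<open>\<not> _\<close> in auto)
    have Q: "\<And>k. k < m0 \<Longrightarrow> ht C R (take k v) \<ge> 0" unfolding m0_def using not_less_Least by fastforce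
    have "m0 \<noteq> 0" using P by (cases m0) auto
    then obtain j where j: "m0 = Suc j" by (cases m0) auto
    have jl: "j < length v"
    proof (rule ccontr)
      assume "\<not> j < length v" then have "take j v = take m0 v" using j by simp
      then show False using Q[of j] P j by simp
    qed
    have st: "ht C R (take m0 v) = ht C R (take j v) + wt C R (v ! j)" using ht_take_Suc[OF jl] j by simp
    have hj: "ht C R (take j v) \<ge> 0" using Q j by simp
    have wj: "wt C R (v ! j) = -1" and hj0: "ht C R (take j v) = 0" using st P hj wt_cases[of C R "v ! j"] by auto
    have "v ! j \<in> R" using wj by (simp add: wt_m1)
    then obtain i where mi: "matched C R v i j" using wm jl unfolding well_matched_def pending_ret_def by blast
    have "ht C R (take i v) = ht C R (take (Suc j) v)" using matched_H[OF CR mi] by simp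
    moreover have "i < m0" using mi j by (simp add: matched_def)
    ultimately show False using Q[of i] P j by simp
  qed
  have "ht C R v \<ge> 0" using pos[of "length v"] by simp
  moreover have "\<not> ht C R v > 0"
  proof
    assume "ht C R v > 0"
    then obtain m where "pending_call C R v m" using pending_above[OF CR, of 0 v] by auto
    then show False using wm by (simp add: well_matched_def)
  qed
  ultimately show ?thesis using pos by (simp add: bal_def)
qed

lemma wn_factor:
  assumes CR: "C \<inter> R = {}" and disj: "\<forall>i<n. \<forall>j<n. i \<noteq> j \<longrightarrow> Comp i \<inter> Comp j = {}" and i: "i < n"
    and w: "wm C R f"
  shows "(\<forall>a b. matched C R f a b \<longrightarrow> (\<exists>k<n. f ! a \<in> Comp k \<and> f ! b \<in> Comp k)) \<Longrightarrow> ht C R (proj (Comp i) f) = 0"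
  using w
proof (induction rule: wm.induct)
  case wm_nil then show ?case by (simp add: proj_def)
next
  case (wm_int a) then show ?case by (simp add: proj_def wt_def)
next
  case (wm_nest c r u)
  have "matched C R ([c] @ u @ [r]) 0 (length u + 1)"
    using wm_nest by (simp add: matched_def nth_append)
  then obtain k where k: "k < n" "c \<in> Comp k" "r \<in> Comp k" using wm_nest.prems by fastforce
  have "\<forall>a b. matched C R u a b \<longrightarrow> (\<exists>k<n. u ! a \<in> Comp k \<and> u ! b \<in> Comp k)"
  proof (intro allI impI)
    fix a b assume "matched C R u a b"
    then have "matched C R ([c] @ u @ [r]) (length [c] + a) (length [c] + b)" by (rule matched_shift)
    moreover have "a < length u" "b < length u" using \<open>matched C R u a b\<close> by (auto simp: matched_def)
    ultimately show "\<exists>k<n. u ! a \<in> Comp k \<and> u ! b \<in> Comp k" using wm_nest.prems by (fastforce simp: nth_append)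
  qed
  then have IH: "ht C R (proj (Comp i) u) = 0" using wm_nest.IH by blast
  have wc: "wt C R c = 1" "wt C R r = -1" using wm_nest CR by (auto simp: wt_def)
  show ?case
  proof (cases "k = i")
    case True then show ?thesis using k IH wc by (simp add: proj_def)
  next
    case False
    then have "c \<notin> Comp i" "r \<notin> Comp i" using disj k i by blast+
    then show ?thesis using IH by (simp add: proj_def)
  qed
next
  case (wm_app u v)
  have "\<forall>a b. matched C R u a b \<longrightarrow> (\<exists>k<n. u ! a \<in> Comp k \<and> u ! b \<in> Comp k)"
  proof (intro allI impI)
    fix a b assume m: "matched C R u a b"
    then have "matched C R (u @ v) a b" by (rule matched_prefix)
    moreover have "a < length u" "b < length u" using m by (auto simp: matched_def)
    ultimately show "\<exists>k<n. u ! a \<in> Comp k \<and> u ! b \<in> Comp k" using wm_app.prems by (fastforce simp: nth_append)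
  qed
  moreover have "\<forall>a b. matched C R v a b \<longrightarrow> (\<exists>k<n. v ! a \<in> Comp k \<and> v ! b \<in> Comp k)"
  proof (intro allI impI)
    fix a b assume m: "matched C R v a b"
    then have "matched C R (u @ v @ []) (length u + a) (length u + b)" by (rule matched_shift)
    then have "matched C R (u @ v) (length u + a) (length u + b)" by simp
    then have "\<exists>k<n. (u @ v) ! (length u + a) \<in> Comp k \<and> (u @ v) ! (length u + b) \<in> Comp k" using wm_app.prems by blast
    then show "\<exists>k<n. v ! a \<in> Comp k \<and> v ! b \<in> Comp k" by (simp add: nth_append)
  qed
  ultimately show ?case using wm_app.IH by (simp add: proj_def)
qed



definition enc :: "nat \<Rightarrow> nat \<Rightarrow> nat \<Rightarrow> nat" where "enc K q t = q * K + t"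

lemma enc_div[simp]: "t < K \<Longrightarrow> enc K q t div K = q" by (simp add: enc_def)
lemma enc_mod[simp]: "t < K \<Longrightarrow> enc K q t mod K = t" by (simp add: enc_def)

definition dc2 :: "nat \<Rightarrow> ('a \<Rightarrow> nat) \<Rightarrow> (nat \<Rightarrow> 'a \<Rightarrow> nat \<times> nat) \<Rightarrow> nat \<Rightarrow> 'a \<Rightarrow> nat \<times> nat" where
  "dc2 K cf dc s a = (enc K (fst (dc (s div K) a)) (cf a), enc K (snd (dc (s div K) a)) (s mod K))"
definition dr2 :: "nat \<Rightarrow> nat \<Rightarrow> (nat \<Rightarrow> nat option \<Rightarrow> 'a \<Rightarrow> nat) \<Rightarrow> nat \<Rightarrow> nat option \<Rightarrow> 'a \<Rightarrow> nat" where
  "dr2 K n dr s go a = (case go of None \<Rightarrow> enc K (dr (s div K) None a) n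
     | Some g \<Rightarrow> enc K (dr (s div K) (Some (g div K)) a) (g mod K))"
definition di2 :: "nat \<Rightarrow> (nat \<Rightarrow> 'a \<Rightarrow> nat) \<Rightarrow> nat \<Rightarrow> 'a \<Rightarrow> nat" where
  "di2 K di s a = enc K (di (s div K) a) (s mod K)"

definition TT :: "'a set \<Rightarrow> 'a set \<Rightarrow> nat \<Rightarrow> ('a \<Rightarrow> nat) \<Rightarrow> 'a list \<Rightarrow> nat list" where
  "TT C R n cf u = map (\<lambda>k. cf (u ! k)) (ps C R u) @ [n]"

lemma vpa_run_snoc: "vpa_run C R dc dr di cfg (u @ [a]) = vpa_step C R dc dr di (vpa_run C R dc dr di cfg u) a"
  by (simp add: vpa_run_def)

lemma TT_cong: "(\<forall>k\<in>set (ps C R u). k < length u) \<Longrightarrow> map (\<lambda>k. cf ((u @ [a]) ! k)) (ps C R u) = map (\<lambda>k. cf (u ! k)) (ps C R u)"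
  by (auto simp: nth_append)

lemma vpa_sim:
  assumes CR: "C \<inter> R = {}" and cfK: "\<forall>a. cf a < K" and nK: "n < K"
  shows "vpa_run C R (dc2 K cf dc) (dr2 K n dr) (di2 K di) (enc K q0 n, []) u =
     (enc K (fst (vpa_run C R dc dr di (q0, []) u)) (hd (TT C R n cf u)),
      map (case_prod (enc K)) (zip (snd (vpa_run C R dc dr di (q0, []) u)) (tl (TT C R n cf u)))) \<and>
     length (snd (vpa_run C R dc dr di (q0, []) u)) = length (ps C R u)"
proof (induction u rule: rev_induct)
  case Nil then show ?case by (simp add: vpa_run_def TT_def)
next
  case (snoc a u)
  obtain q st where r: "vpa_run C R dc dr di (q0, []) u = (q, st)" by fastforce
  define T where "T = TT C R n cf u"
  have lt: "\<forall>k\<in>set (ps C R u). k < length u" using ps_pending[OF CR, of u] pending_lt by blast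
  have TTc: "map (\<lambda>k. cf ((u @ [a]) ! k)) (ps C R u) = map (\<lambda>k. cf (u ! k)) (ps C R u)" using TT_cong[OF lt] .
  have hdT: "hd T < K" using cfK nK unfolding T_def by (cases "ps C R u") (auto simp: TT_def)
  have Tne: "T = hd T # tl T" unfolding T_def TT_def by simp
  have IH: "vpa_run C R (dc2 K cf dc) (dr2 K n dr) (di2 K di) (enc K q0 n, []) u =
     (enc K q (hd T), map (case_prod (enc K)) (zip st (tl T)))"
     "length st = length (ps C R u)" using snoc r unfolding T_def by auto
  have S: "vpa_run C R (dc2 K cf dc) (dr2 K n dr) (di2 K di) (enc K q0 n, []) (u @ [a]) =
     vpa_step C R (dc2 K cf dc) (dr2 K n dr) (di2 K di) (enc K q (hd T), map (case_prod (enc K)) (zip st (tl T))) a"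
    unfolding vpa_run_snoc IH(1) ..
  have S0: "vpa_run C R dc dr di (q0, []) (u @ [a]) = vpa_step C R dc dr di (q, st) a"
    unfolding vpa_run_snoc r ..
  show ?case
  proof (cases "a \<in> C")
    case True
    have T': "TT C R n cf (u @ [a]) = cf a # T" using True lt unfolding T_def TT_def ps_snoc by (auto simp: nth_append)
    have "map (case_prod (enc K)) (zip (snd (dc q a) # st) T) = enc K (snd (dc q a)) (hd T) # map (case_prod (enc K)) (zip st (tl T))"
      by (subst Tne) simp
    then show ?thesis unfolding S S0 T' using True IH(2) hdT cfK
      by (simp add: vpa_step_def dc2_def ps_snoc)
  next
    case aC: False
    show ?thesis
    proof (cases "a \<in> R")
      case aR: True
      show ?thesis
      proof (cases "ps C R u")
        case Nil
        then have st: "st = []" using IH by simp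
        have T': "TT C R n cf (u @ [a]) = [n]" "T = [n]" using aC aR Nil unfolding T_def TT_def ps_snoc by simp_all
        show ?thesis unfolding S S0 T' using aC aR Nil st nK
          by (simp add: vpa_step_def dr2_def ps_snoc)
      next
        case (Cons p ks)
        then obtain g st' where st: "st = g # st'" using IH by (cases st) auto
        define T2 where "T2 = map (\<lambda>k. cf (u ! k)) ks @ [n]"
        have T: "T = cf (u ! p) # T2" using Cons unfolding T_def T2_def by (simp add: TT_def)
        have h2: "hd T2 < K" using cfK nK unfolding T2_def by (cases ks) auto
        have lks: "\<forall>k\<in>set ks. k < length u" using lt Cons by simp
        have T': "TT C R n cf (u @ [a]) = T2" using aC aR Cons lks unfolding TT_def T2_def ps_snoc
          by (auto simp: nth_append)
        have T2ne: "T2 = hd T2 # tl T2" unfolding T2_def by simp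
        have "map (case_prod (enc K)) (zip (g # st') T2) =
            enc K g (hd T2) # map (case_prod (enc K)) (zip st' (tl T2))"
          by (subst T2ne) simp
        moreover have "cf (u ! p) < K" using cfK by blast
        ultimately have e1: "map (case_prod (enc K)) (zip st (tl T)) = enc K g (hd T2) # map (case_prod (enc K)) (zip st' (tl T2))"
          and cp: "cf (u ! p) < K" unfolding st T by simp_all
        have e2: "vpa_step C R (dc2 K cf dc) (dr2 K n dr) (di2 K di) (enc K q (cf (u ! p)), enc K g (hd T2) # map (case_prod (enc K)) (zip st' (tl T2))) a
           = (enc K (dr q (Some g) a) (hd T2), map (case_prod (enc K)) (zip st' (tl T2)))"
          using aC aR h2 cp by (simp add: vpa_step_def dr2_def)
        have e3: "vpa_step C R dc dr di (q, st) a = (dr q (Some g) a, st')" using aC aR st by (simp add: vpa_step_def)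
        have e4: "length st' = length (ps C R (u @ [a]))" using IH(2) st Cons aC aR by (simp add: ps_snoc)
        have hT: "hd T = cf (u ! p)" using T by simp
        show ?thesis unfolding S S0 T' e1 hT e3 e2 using e4 by simp
      qed
    next
      case False
      have T': "TT C R n cf (u @ [a]) = T" using aC False lt unfolding T_def TT_def ps_snoc by (auto simp: nth_append)
      show ?thesis unfolding S S0 T' using aC False IH(2) hdT
        by (simp add: vpa_step_def di2_def ps_snoc)
    qed
  qed
qed

definition Xf :: "'a set \<Rightarrow> (nat \<Rightarrow> 'a set) \<Rightarrow> nat \<Rightarrow> nat \<Rightarrow> 'a \<Rightarrow> bool" where
  "Xf R Comp n t z \<longleftrightarrow> t < n \<and> z \<in> R \<and> z \<notin> Comp t"

definition modo :: "('a \<Rightarrow> bool) \<Rightarrow> ('a \<Rightarrow> 'a \<Rightarrow> bool) \<Rightarrow> 'a \<Rightarrow> 'a \<Rightarrow> bool" where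
  "modo X r x y = (if X x = X y then r x y else X y)"

lemma modo_total: assumes "strict_total r" shows "strict_total (modo X r)"
proof -
  have i: "\<forall>a. \<not> r a a" and t: "\<forall>a b c. r a b \<longrightarrow> r b c \<longrightarrow> r a c" and o: "\<forall>a b. a \<noteq> b \<longrightarrow> r a b \<or> r b a"
    using assms unfolding strict_total_def by blast+
  show ?thesis unfolding strict_total_def
  proof (intro conjI allI impI)
    fix a show "\<not> modo X r a a" using i by (simp add: modo_def)
  next
    fix a b c assume "modo X r a b" "modo X r b c" then show "modo X r a c"
      using t unfolding modo_def by (cases "X a"; cases "X b"; cases "X c") auto
  next
    fix a b :: 'a assume "a \<noteq> b" then show "modo X r a b \<or> modo X r b a"
      using o unfolding modo_def by (cases "X a"; cases "X b") auto
  qed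
qed

definition tk :: "'a set \<Rightarrow> 'a set \<Rightarrow> nat \<Rightarrow> ('a \<Rightarrow> nat) \<Rightarrow> 'a list \<Rightarrow> nat" where
  "tk C R n cf u = (case ps C R u of [] \<Rightarrow> n | p # _ \<Rightarrow> cf (u ! p))"

definition ordp :: "'a set \<Rightarrow> 'a set \<Rightarrow> nat \<Rightarrow> (nat \<Rightarrow> 'a set) \<Rightarrow> ('a \<Rightarrow> nat) \<Rightarrow>
    ('a list \<Rightarrow> 'a \<Rightarrow> 'a \<Rightarrow> bool) \<Rightarrow> 'a list \<Rightarrow> 'a \<Rightarrow> 'a \<Rightarrow> bool" where
  "ordp C R n Comp cf ord u = modo (Xf R Comp n (tk C R n cf u)) (ord u)"

lemma tk_TT: "tk C R n cf u = hd (TT C R n cf u)"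
  by (cases "ps C R u") (auto simp: tk_def TT_def)

lemma vp_ordp:
  assumes CR: "C \<inter> R = {}" and cf: "\<forall>a. cf a < n" and vp: "vp_order C R ord"
  shows "vp_order C R (ordp C R n Comp cf ord)"
proof -
  obtain Q \<Gamma> q0 dc dr di f where
    fQ: "finite (Q :: nat set)" and fG: "finite (\<Gamma> :: nat set)" and q0: "q0 \<in> Q" and
    hdc: "\<forall>q\<in>Q. \<forall>a. fst (dc q a) \<in> Q \<and> snd (dc q a) \<in> \<Gamma>" and
    hdr: "\<forall>q\<in>Q. \<forall>a. dr q None a \<in> Q \<and> (\<forall>g\<in>\<Gamma>. dr q (Some g) a \<in> Q)" and
    hdi: "\<forall>q\<in>Q. \<forall>a. di q a \<in> Q" and
    hf: "\<forall>q\<in>Q. strict_total (f q)" and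
    ho: "\<forall>w. ord w = f (fst (vpa_run C R dc dr di (q0, []) w))"
    using vp unfolding vp_order_def by blast
  define K where "K = Suc n"
  have cfK: "\<forall>a. cf a < K" using cf unfolding K_def using less_SucI by blast
  have nK: "n < K" using K_def by simp
  define Q' where "Q' = (\<lambda>(q, t). enc K q t) ` (Q \<times> {..n})"
  define G' where "G' = (\<lambda>(q, t). enc K q t) ` (\<Gamma> \<times> {..n})"
  define f' where "f' = (\<lambda>s. modo (Xf R Comp n (s mod K)) (f (s div K)))"
  have inQ: "\<And>q t. q \<in> Q \<Longrightarrow> t \<le> n \<Longrightarrow> enc K q t \<in> Q'" unfolding Q'_def by force
  have inG: "\<And>q t. q \<in> \<Gamma> \<Longrightarrow> t \<le> n \<Longrightarrow> enc K q t \<in> G'" unfolding G'_def by force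
  have outQ: "\<And>s. s \<in> Q' \<Longrightarrow> s div K \<in> Q \<and> s mod K \<le> n"
    unfolding Q'_def using nK by (auto simp: K_def)
  have outG: "\<And>s. s \<in> G' \<Longrightarrow> s div K \<in> \<Gamma> \<and> s mod K \<le> n"
    unfolding G'_def using nK by (auto simp: K_def)
  have c1: "finite Q'" unfolding Q'_def using fQ by simp
  have c2: "finite G'" unfolding G'_def using fG by simp
  have c3: "enc K q0 n \<in> Q'" using q0 inQ by simp
  have c4: "\<forall>s\<in>Q'. \<forall>a. fst (dc2 K cf dc s a) \<in> Q' \<and> snd (dc2 K cf dc s a) \<in> G'"
  proof (intro ballI allI conjI)
    fix s a assume s: "s \<in> Q'"
    show "fst (dc2 K cf dc s a) \<in> Q'" using outQ[OF s] hdc inQ cf by (simp add: dc2_def less_imp_le)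
    show "snd (dc2 K cf dc s a) \<in> G'" using outQ[OF s] hdc inG by (simp add: dc2_def)
  qed
  have c5: "\<forall>s\<in>Q'. \<forall>a. dr2 K n dr s None a \<in> Q' \<and> (\<forall>g\<in>G'. dr2 K n dr s (Some g) a \<in> Q')"
  proof (intro ballI allI conjI)
    fix s a assume s: "s \<in> Q'"
    show "dr2 K n dr s None a \<in> Q'" using outQ[OF s] hdr inQ by (simp add: dr2_def)
    fix g assume g: "g \<in> G'"
    show "dr2 K n dr s (Some g) a \<in> Q'" using outQ[OF s] outG[OF g] hdr inQ by (simp add: dr2_def)
  qed
  have c6: "\<forall>s\<in>Q'. \<forall>a. di2 K di s a \<in> Q'"
    using outQ hdi inQ by (simp add: di2_def)
  have c7: "\<forall>s\<in>Q'. strict_total (f' s)"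
    unfolding f'_def using outQ hf by (simp add: modo_total)
  have c8: "\<forall>w. ordp C R n Comp cf ord w = f' (fst (vpa_run C R (dc2 K cf dc) (dr2 K n dr) (di2 K di) (enc K q0 n, []) w))"
  proof
    fix w
    have sim: "fst (vpa_run C R (dc2 K cf dc) (dr2 K n dr) (di2 K di) (enc K q0 n, []) w) =
      enc K (fst (vpa_run C R dc dr di (q0, []) w)) (hd (TT C R n cf w))"
      by (simp add: vpa_sim[OF CR cfK nK])
    have hdT: "hd (TT C R n cf w) < K" using cfK nK by (cases "ps C R w") (auto simp: TT_def)
    show "ordp C R n Comp cf ord w = f' (fst (vpa_run C R (dc2 K cf dc) (dr2 K n dr) (di2 K di) (enc K q0 n, []) w))"
      unfolding sim f'_def using hdT ho by (simp add: ordp_def tk_TT)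
  qed
  show ?thesis unfolding vp_order_def
    apply (intro exI conjI)
           apply (rule c1)
          apply (rule c2)
         apply (rule c3)
        apply (rule c4)
       apply (rule c5)
      apply (rule c6)
     apply (rule c7)
    apply (rule c8)
    done
qed



lemma swap_step_sym: "swap_step n Comp x y \<Longrightarrow> swap_step n Comp y x"
  unfolding swap_step_def indep_def by blast

lemma trace_eq_sym: "trace_eq n Comp x y \<Longrightarrow> trace_eq n Comp y x"
  unfolding trace_eq_def
  by (induction rule: rtranclp_induct) (auto intro: converse_rtranclp_into_rtranclp swap_step_sym)

lemma trace_eq_trans: "trace_eq n Comp x y \<Longrightarrow> trace_eq n Comp y z \<Longrightarrow> trace_eq n Comp x z"
  unfolding trace_eq_def by simp

lemma trace_eq_length: "trace_eq n Comp x y \<Longrightarrow> length x = length y"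
  unfolding trace_eq_def
  by (induction rule: rtranclp_induct) (auto simp: swap_step_def)

lemma swap_proj:
  assumes disj: "\<forall>i<n. \<forall>j<n. i \<noteq> j \<longrightarrow> Comp i \<inter> Comp j = {}" and i: "i < n"
    and s: "swap_step n Comp x y"
  shows "proj (Comp i) x = proj (Comp i) y"
proof -
  obtain u a b v where h: "indep n Comp a b" "x = u @ [a, b] @ v" "y = u @ [b, a] @ v"
    using s unfolding swap_step_def by blast
  obtain k l where kl: "k < n" "l < n" "k \<noteq> l" "a \<in> Comp k" "b \<in> Comp l" using h(1) unfolding indep_def by blast
  have "\<not> (a \<in> Comp i \<and> b \<in> Comp i)" using disj kl i by blast
  then show ?thesis using h by (auto simp: proj_def)
qed

lemma trace_proj:
  assumes disj: "\<forall>i<n. \<forall>j<n. i \<noteq> j \<longrightarrow> Comp i \<inter> Comp j = {}" and i: "i < n"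
    and t: "trace_eq n Comp x y"
  shows "proj (Comp i) x = proj (Comp i) y"
  using t unfolding trace_eq_def
  by (induction rule: rtranclp_induct) (use swap_proj[OF disj i] in auto)

lemma shuffle_trace:
  assumes disj: "\<forall>i<n. \<forall>j<n. i \<noteq> j \<longrightarrow> Comp i \<inter> Comp j = {}"
    and t: "trace_eq n Comp u w" and w: "w \<in> shuffle n Comp P"
  shows "u \<in> shuffle n Comp P"
  using w trace_proj[OF disj _ t] unfolding shuffle_def by auto

lemma move_left:
  assumes "\<forall>y\<in>set x. indep n Comp a y"
  shows "trace_eq n Comp (pre @ [a] @ x @ z) (pre @ x @ [a] @ z)"
  using assms
proof (induction x arbitrary: pre)
  case Nil then show ?case by (simp add: trace_eq_def)
next
  case (Cons y x)
  have "swap_step n Comp (pre @ [a] @ (y # x) @ z) ((pre @ [y]) @ [a] @ x @ z)"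
    unfolding swap_step_def using Cons.prems
    by (intro exI[of _ pre] exI[of _ a] exI[of _ y] exI[of _ "x @ z"]) auto
  moreover have "trace_eq n Comp ((pre @ [y]) @ [a] @ x @ z) ((pre @ [y]) @ x @ [a] @ z)"
    using Cons.IH[of "pre @ [y]"] Cons.prems by simp
  ultimately show ?case unfolding trace_eq_def by (simp add: converse_rtranclp_into_rtranclp)
qed

section \<open>Contextual lexicographic comparison\<close>

lemma ctx_le_iff:
  assumes st: "\<forall>\<alpha>. strict_total (co \<alpha>)" and l: "length x = length y"
  shows "ctx_le co x y \<longleftrightarrow> x = y \<or> (\<exists>k<length x. take k x = take k y \<and> co (take k x) (x ! k) (y ! k))"
proof
  assume "ctx_le co x y"
  then consider (a) t where "y = x @ t" | (b) \<alpha> a b \<beta> \<gamma> where "x = \<alpha> @ a # \<beta>" "y = \<alpha> @ b # \<gamma>" "co \<alpha> a b"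
    unfolding ctx_le_def by blast
  then show "x = y \<or> (\<exists>k<length x. take k x = take k y \<and> co (take k x) (x ! k) (y ! k))"
  proof cases
    case a then show ?thesis using l by simp
  next
    case b then show ?thesis by (intro disjI2 exI[of _ "length \<alpha>"]) auto
  qed
next
  assume "x = y \<or> (\<exists>k<length x. take k x = take k y \<and> co (take k x) (x ! k) (y ! k))"
  then show "ctx_le co x y"
  proof
    assume "x = y" then show ?thesis unfolding ctx_le_def by auto
  next
    assume "\<exists>k<length x. take k x = take k y \<and> co (take k x) (x ! k) (y ! k)"
    then obtain k where k: "k < length x" "take k x = take k y" "co (take k x) (x ! k) (y ! k)" by blast
    have "x = take k x @ x ! k # drop (Suc k) x" by (rule id_take_nth_drop[OF k(1)])
    moreover have "y = take k x @ y ! k # drop (Suc k) y" using k l by (metis id_take_nth_drop)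
    ultimately show ?thesis unfolding ctx_le_def using k(3) by blast
  qed
qed

lemma first_diff_unique:
  assumes "take k x = take k y" "x ! k \<noteq> y ! k" "take k' x = take k' y" "x ! k' \<noteq> y ! k'"
    "k < length x" "k' < length x" "length x = length y"
  shows "k = k'"
proof (rule ccontr)
  assume "k \<noteq> k'"
  then consider "k < k'" | "k' < k" by linarith
  then show False
  proof cases
    case 1
    have "x ! k = y ! k" using 1 assms(3) by (metis nth_take)
    then show False using assms(2) by simp
  next
    case 2
    have "x ! k' = y ! k'" using 2 assms(1) by (metis nth_take)
    then show False using assms(4) by simp
  qed
qed

lemma st_irrefl: "strict_total r \<Longrightarrow> \<not> r a a" by (simp add: strict_total_def)
lemma st_trans: "strict_total r \<Longrightarrow> r a b \<Longrightarrow> r b c \<Longrightarrow> r a c" unfolding strict_total_def by blast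
lemma st_asym: "strict_total r \<Longrightarrow> r a b \<Longrightarrow> \<not> r b a" unfolding strict_total_def by blast
lemma st_total: "strict_total r \<Longrightarrow> a \<noteq> b \<Longrightarrow> r a b \<or> r b a" unfolding strict_total_def by blast

lemma ctx_le_antisym:
  assumes st: "\<forall>\<alpha>. strict_total (co \<alpha>)" and l: "length x = length y"
    and "ctx_le co x y" "ctx_le co y x"
  shows "x = y"
proof (rule ccontr)
  assume ne: "x \<noteq> y"
  obtain k where k: "k<length x" "take k x = take k y" "co (take k x) (x ! k) (y ! k)"
    using assms ne ctx_le_iff[OF st l] by blast
  obtain k' where k': "k'<length x" "take k' y = take k' x" "co (take k' y) (y ! k') (x ! k')"
    using assms ne ctx_le_iff[OF st l[symmetric]] l by auto
  have d: "x ! k \<noteq> y ! k" "x ! k' \<noteq> y ! k'" using k k' st st_irrefl by metis+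
  have "k = k'" using first_diff_unique[OF k(2) d(1) k'(2)[symmetric] d(2) k(1) k'(1) l] .
  then show False using k k' st st_asym by metis
qed

lemma ctx_le_trans:
  assumes st: "\<forall>\<alpha>. strict_total (co \<alpha>)" and l: "length x = length y" "length y = length z"
    and xy: "ctx_le co x y" and yz: "ctx_le co y z"
  shows "ctx_le co x z"
proof (cases "x = y \<or> y = z")
  case True then show ?thesis using xy yz by auto
next
  case False
  obtain k where k: "k<length x" "take k x = take k y" "co (take k x) (x ! k) (y ! k)"
    using xy False ctx_le_iff[OF st l(1)] by blast
  obtain k' where k': "k'<length y" "take k' y = take k' z" "co (take k' y) (y ! k') (z ! k')"
    using yz False ctx_le_iff[OF st l(2)] by blast
  have lxz: "length x = length z" using l by simp
  consider "k < k'" | "k' < k" | "k = k'" by linarith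
  then show ?thesis
  proof cases
    case 1
    have "take k (take k' y) = take k (take k' z)" using k'(2) by simp
    then have "take k y = take k z" using 1 by (simp add: min_def)
    moreover have "y ! k = z ! k" using 1 k'(2) by (metis nth_take)
    ultimately show ?thesis using ctx_le_iff[OF st lxz] k by auto
  next
    case 2
    have "take k' (take k x) = take k' (take k y)" using k(2) by simp
    then have t: "take k' x = take k' y" using 2 by (simp add: min_def)
    moreover have "x ! k' = y ! k'" using 2 k(2) by (metis nth_take)
    ultimately show ?thesis using ctx_le_iff[OF st lxz] k' l by auto
  next
    case 3
    then show ?thesis using ctx_le_iff[OF st lxz] k k' st st_trans by metis
  qed
qed

lemma ctx_le_total:
  assumes st: "\<forall>\<alpha>. strict_total (co \<alpha>)" and l: "length x = length y"
  shows "ctx_le co x y \<or> ctx_le co y x"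
proof (cases "x = y")
  case True then show ?thesis unfolding ctx_le_def by auto
next
  case False
  then have "\<exists>k<length x. x ! k \<noteq> y ! k" using l nth_equalityI by blast
  define k where "k = (LEAST k. k < length x \<and> x ! k \<noteq> y ! k)"
  have kP: "k < length x" "x ! k \<noteq> y ! k" unfolding k_def using LeastI_ex[OF \<open>\<exists>k<length x. _\<close>] by auto
  have kl: "\<And>j. j < k \<Longrightarrow> x ! j = y ! j" unfolding k_def using kP(1)
    by (metis (mono_tags, lifting) k_def less_trans not_less_Least)
  have tk: "take k x = take k y" using kP l kl by (intro nth_equalityI) auto
  show ?thesis
    using st_total[OF st[rule_format, of "take k x"] kP(2)] ctx_le_iff[OF st l] ctx_le_iff[OF st l[symmetric]] tk kP l
    by (metis)
qed

lemma ctx_min_exists: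
  assumes st: "\<forall>\<alpha>. strict_total (co \<alpha>)" and fin: "finite E" and ne: "E \<noteq> {}"
    and l: "\<forall>x\<in>E. length x = m"
  shows "\<exists>z\<in>E. \<forall>x\<in>E. ctx_le co x z \<longrightarrow> x = z"
  using fin ne l
proof (induction E rule: finite_ne_induct)
  case (singleton x) then show ?case by simp
next
  case (insert x F)
  obtain z where z: "z \<in> F" "\<forall>y\<in>F. ctx_le co y z \<longrightarrow> y = z" using insert by auto
  show ?case
  proof (cases "ctx_le co x z")
    case True
    have "\<forall>y\<in>insert x F. ctx_le co y x \<longrightarrow> y = x"
    proof (intro ballI impI)
      fix y assume y: "y \<in> insert x F" "ctx_le co y x"
      show "y = x"
      proof (cases "y = x")
        case False
        then have yF: "y \<in> F" using y by simp
        have "ctx_le co y z" using ctx_le_trans[OF st _ _ y(2) True] insert.prems yF z by auto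
        then have "y = z" using z yF by blast
        then show ?thesis using ctx_le_antisym[OF st _ True] y insert.prems z by auto
      qed simp
    qed
    then show ?thesis by blast
  next
    case False
    then show ?thesis using z by auto
  qed
qed



lemma vp_total:
  assumes vp: "vp_order C R ord"
  shows "strict_total (ord w)"
proof -
  obtain Q \<Gamma> q0 dc dr di f where
    q0: "q0 \<in> (Q :: nat set)" and
    hdc: "\<forall>q\<in>Q. \<forall>a. fst (dc q a) \<in> Q \<and> snd (dc q a) \<in> (\<Gamma> :: nat set)" and
    hdr: "\<forall>q\<in>Q. \<forall>a. dr q None a \<in> Q \<and> (\<forall>g\<in>\<Gamma>. dr q (Some g) a \<in> Q)" and
    hdi: "\<forall>q\<in>Q. \<forall>a. di q a \<in> Q" and
    hf: "\<forall>q\<in>Q. strict_total (f q)" and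
    ho: "\<forall>w. ord w = f (fst (vpa_run C R dc dr di (q0, []) w))"
    using vp unfolding vp_order_def by blast
  have inv: "fst (vpa_run C R dc dr di (q0, []) w) \<in> Q \<and> set (snd (vpa_run C R dc dr di (q0, []) w)) \<subseteq> \<Gamma>"
  proof (induction w rule: rev_induct)
    case Nil then show ?case using q0 by (simp add: vpa_run_def)
  next
    case (snoc a u)
    obtain q st where r: "vpa_run C R dc dr di (q0, []) u = (q, st)" by fastforce
    have qQ: "q \<in> Q" and sG: "set st \<subseteq> \<Gamma>" using snoc r by auto
    show ?case
      unfolding vpa_run_snoc r using qQ sG hdc hdr hdi
      by (cases st) (auto simp: vpa_step_def Let_def)
  qed
  then show ?thesis using ho hf by simp
qed

definition ci :: "nat \<Rightarrow> (nat \<Rightarrow> 'a set) \<Rightarrow> 'a \<Rightarrow> nat" where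
  "ci n Comp a = (SOME i. i < n \<and> a \<in> Comp i)"

lemma ci_prop:
  assumes cover: "(\<Union>i<n. Comp i) = UNIV"
  shows "ci n Comp a < n \<and> a \<in> Comp (ci n Comp a)"
proof -
  have "\<exists>i. i < n \<and> a \<in> Comp i" using cover by blast
  then show ?thesis unfolding ci_def by (rule someI_ex)
qed

lemma ci_eq:
  assumes cover: "(\<Union>i<n. Comp i) = UNIV" and disj: "\<forall>i<n. \<forall>j<n. i \<noteq> j \<longrightarrow> Comp i \<inter> Comp j = {}"
    and "i < n" "a \<in> Comp i"
  shows "ci n Comp a = i"
  using ci_prop[OF cover, of a] assms by blast

theorem lemma4p3:
  fixes C R :: "'a::finite set" and n :: nat and Comp :: "nat \<Rightarrow> 'a set"
    and ord :: "'a list \<Rightarrow> 'a \<Rightarrow> 'a \<Rightarrow> bool"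
  assumes CR: "C \<inter> R = {}"
    and disj: "\<forall>i<n. \<forall>j<n. i \<noteq> j \<longrightarrow> Comp i \<inter> Comp j = {}"
    and cover: "(\<Union>i<n. Comp i) = UNIV"
    and vp: "vp_order C R ord"
  shows "\<exists>ord'. coherent C R n Comp ord' \<and> vp_order C R ord' \<and>
     (\<forall>P. (\<forall>i<n. P i \<subseteq> lists (Comp i) \<and> (\<forall>w \<in> P i. well_matched C R w)) \<longrightarrow>
          red n Comp ord (wn_shuffle C R n Comp P) = red n Comp ord' (shuffle n Comp P))"
proof -
  define cf where "cf = ci n Comp"
  have cfp: "\<And>a. cf a < n \<and> a \<in> Comp (cf a)" unfolding cf_def using ci_prop[OF cover] by blast
  have cfe: "\<And>a i. i < n \<Longrightarrow> a \<in> Comp i \<Longrightarrow> cf a = i" unfolding cf_def using ci_eq[OF cover disj] by blast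
  define ord' where "ord' = ordp C R n Comp cf ord"
  have st: "\<forall>\<alpha>. strict_total (ord \<alpha>)" using vp_total[OF vp] by blast
  have st': "\<forall>\<alpha>. strict_total (ord' \<alpha>)" unfolding ord'_def ordp_def using st modo_total by blast
  have ord'_eq: "\<And>\<alpha>. ord' \<alpha> = modo (Xf R Comp n (tk C R n cf \<alpha>)) (ord \<alpha>)" unfolding ord'_def ordp_def by simp
  have tk_ps: "\<And>\<alpha> p rest. ps C R \<alpha> = p # rest \<Longrightarrow> tk C R n cf \<alpha> = cf (\<alpha> ! p)" by (simp add: tk_def)
  have vp': "vp_order C R ord'" unfolding ord'_def using vp_ordp[OF CR _ vp] cfp by blast
  have coh: "coherent C R n Comp ord'"
    unfolding coherent_def
  proof (intro allI impI ballI)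
    fix u i a r
    assume i: "i < n" and ex: "\<exists>k. pending_call C R u k"
      and g: "u ! (GREATEST k. pending_call C R u k) \<in> C \<inter> Comp i"
      and a: "a \<in> Comp i" and r: "\<exists>j<n. j \<noteq> i \<and> r \<in> R \<inter> Comp j"
    obtain p rest where ps: "ps C R u = p # rest" using ps_Nil_iff[OF CR, of u] ex by (cases "ps C R u") auto
    have "u ! p \<in> Comp i" using g ps_greatest[OF CR ps] by simp
    then have tk: "tk C R n cf u = i" using tk_ps[OF ps] cfe i by simp
    have "\<not> Xf R Comp n i a" using a by (simp add: Xf_def)
    moreover have "Xf R Comp n i r" using r i disj by (auto simp: Xf_def)
    ultimately show "ord' u a r" unfolding ord'_eq tk modo_def by simp
  qed
  have main: "red n Comp ord (wn_shuffle C R n Comp P) = red n Comp ord' (shuffle n Comp P)"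
    if HP: "\<forall>i<n. P i \<subseteq> lists (Comp i) \<and> (\<forall>w \<in> P i. well_matched C R w)" for P
  proof -
    define L where "L = shuffle n Comp P"
    have L'eq: "wn_shuffle C R n Comp P = {w \<in> L. well_nested C R n Comp w}" unfolding L_def wn_shuffle_def by simp
    have A: "z \<in> red n Comp ord (wn_shuffle C R n Comp P)" if zr: "z \<in> red n Comp ord' L" for z
    proof -
      have zL: "z \<in> L" and M: "\<And>u. u \<in> L \<Longrightarrow> trace_eq n Comp u z \<Longrightarrow> ctx_le ord' u z \<Longrightarrow> u = z"
        using zr unfolding red_def by auto
      have wn: "well_nested C R n Comp z"
        unfolding well_nested_def
      proof (rule ccontr)
        define bad where "bad = (\<lambda>p q. matched C R z p q \<and> \<not> (\<exists>k<n. z ! p \<in> Comp k \<and> z ! q \<in> Comp k))"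
        assume "\<not> (\<forall>i j. matched C R z i j \<longrightarrow> (\<exists>k<n. z ! i \<in> Comp k \<and> z ! j \<in> Comp k))"
        then have exb: "\<exists>q p. bad p q" unfolding bad_def by blast
        define q0 where "q0 = (LEAST q. \<exists>p. bad p q)"
        obtain p0 where b0: "bad p0 q0" unfolding q0_def using LeastI_ex[OF exb] by blast
        have minb: "\<And>p q. q < q0 \<Longrightarrow> \<not> bad p q" unfolding q0_def using not_less_Least by blast
        have mz: "matched C R z p0 q0" using b0 bad_def by simp
        have pq: "p0 < q0" "q0 < length z" "z ! p0 \<in> C" "z ! q0 \<in> R" "wm C R (take (q0 - p0 - 1) (drop (Suc p0) z))"
          using mz unfolding matched_def by auto
        define i where "i = cf (z ! p0)"
        have i: "i < n" "z ! p0 \<in> Comp i" using cfp i_def by auto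
        have zq: "z ! q0 \<notin> Comp i" using b0 i unfolding bad_def by blast
        define f where "f = take (q0 - p0 - 1) (drop (Suc p0) z)"
        have wmf: "wm C R f" using pq f_def by simp
        have lf: "length f = q0 - p0 - 1" using pq f_def by simp
        have tq: "take (Suc p0) z @ f = take q0 z"
          using take_add[of "Suc p0" "q0 - p0 - 1" z] pq unfolding f_def by simp
        have zdec1: "z = take (Suc p0) z @ f @ drop q0 z" using tq by (metis append.assoc append_take_drop_id)
        have ltp: "length (take (Suc p0) z) = Suc p0" using pq by simp
        have fnth: "\<And>a. a < length f \<Longrightarrow> f ! a = z ! (Suc p0 + a)" using pq unfolding f_def by simp
        have wnf: "\<forall>a b. matched C R f a b \<longrightarrow> (\<exists>k<n. f ! a \<in> Comp k \<and> f ! b \<in> Comp k)"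
        proof (intro allI impI)
          fix a b assume mab: "matched C R f a b"
          have ab: "a < length f" "b < length f" using mab by (auto simp: matched_def)
          have "matched C R (take (Suc p0) z @ f @ drop q0 z) (length (take (Suc p0) z) + a) (length (take (Suc p0) z) + b)"
            by (rule matched_shift[OF mab])
          then have "matched C R z (Suc p0 + a) (Suc p0 + b)" using zdec1 ltp by simp
          moreover have "Suc p0 + b < q0" using ab lf pq by simp
          ultimately have "\<exists>k<n. z ! (Suc p0 + a) \<in> Comp k \<and> z ! (Suc p0 + b) \<in> Comp k"
            using minb unfolding bad_def by blast
          then show "\<exists>k<n. f ! a \<in> Comp k \<and> f ! b \<in> Comp k" using fnth ab by simp
        qed
        have hf: "ht C R (proj (Comp i) f) = 0" using wn_factor[OF CR disj i(1) wmf] wnf by blast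
        have exl: "\<exists>l. q0 \<le> l \<and> l < length z \<and> z ! l \<in> Comp i"
        proof (rule ccontr)
          assume nol: "\<not> (\<exists>l. q0 \<le> l \<and> l < length z \<and> z ! l \<in> Comp i)"
          have pd: "proj (Comp i) (drop q0 z) = []"
            unfolding proj_def filter_empty_conv
          proof
            fix y assume "y \<in> set (drop q0 z)"
            then obtain j where "j < length (drop q0 z)" "drop q0 z ! j = y" by (auto simp: in_set_conv_nth)
            then show "y \<notin> Comp i" using nol by auto
          qed
          have zdec2: "z = take p0 z @ [z ! p0] @ f @ drop q0 z"
            using zdec1 pq by (simp add: take_Suc_conv_app_nth)
          have pz: "proj (Comp i) z = proj (Comp i) (take p0 z) @ [z ! p0] @ proj (Comp i) f"
            using pd i(2) by (subst zdec2) (simp add: proj_def)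
          have "proj (Comp i) z \<in> P i" using zL i(1) unfolding L_def shuffle_def by blast
          then have "well_matched C R (proj (Comp i) z)" using HP i(1) by blast
          then have bz: "bal C R (proj (Comp i) z)" by (rule well_matched_bal[OF CR])
          have "ht C R (take (length (proj (Comp i) (take p0 z))) (proj (Comp i) z)) \<ge> 0"
            using bz unfolding bal_def by blast
          then have "ht C R (proj (Comp i) (take p0 z)) \<ge> 0" unfolding pz by simp
          moreover have "ht C R (proj (Comp i) z) = 0" using bz unfolding bal_def by blast
          moreover have "wt C R (z ! p0) = 1" using pq by (simp add: wt_def)
          ultimately show False using hf unfolding pz by simp
        qed
        define m where "m = (LEAST l. q0 \<le> l \<and> l < length z \<and> z ! l \<in> Comp i)"
        have mP: "q0 \<le> m" "m < length z" "z ! m \<in> Comp i" unfolding m_def using LeastI_ex[OF exl] by auto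
        have mmin: "\<And>l. q0 \<le> l \<Longrightarrow> l < m \<Longrightarrow> z ! l \<notin> Comp i"
          using not_less_Least mP(2) unfolding m_def by fastforce
        have qm: "q0 < m" using mP zq by (cases "q0 = m") auto
        define \<alpha> where "\<alpha> = take q0 z"
        define x where "x = take (m - q0) (drop q0 z)"
        define zz where "zz = drop (Suc m) z"
        define a where "a = z ! m"
        have ax: "\<alpha> @ x = take m z" unfolding \<alpha>_def x_def using take_add[of q0 "m - q0" z] qm by simp
        have zdec: "z = \<alpha> @ x @ [a] @ zz"
          using id_take_nth_drop[OF mP(2)] ax unfolding a_def zz_def by (metis append.assoc append_Cons append_Nil)
        define u where "u = \<alpha> @ [a] @ x @ zz"
        have ind: "\<forall>y\<in>set x. indep n Comp a y"
        proof
          fix y assume "y \<in> set x"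
          then obtain j where j: "j < length x" "x ! j = y" by (auto simp: in_set_conv_nth)
          have "length x = m - q0" unfolding x_def using mP qm by simp
          then have "y = z ! (q0 + j)" "q0 \<le> q0 + j" "q0 + j < m" using j mP unfolding x_def by auto
          then have yn: "y \<notin> Comp i" using mmin by blast
          have "cf y < n" "y \<in> Comp (cf y)" using cfp by auto
          moreover have "cf y \<noteq> i" using yn \<open>y \<in> Comp (cf y)\<close> by auto
          ultimately show "indep n Comp a y" unfolding indep_def using i mP a_def by blast
        qed
        have tr: "trace_eq n Comp u z" unfolding u_def using move_left[OF ind, of \<alpha> zz] zdec by simp
        have uL: "u \<in> L" using shuffle_trace[OF disj tr] zL unfolding L_def by blast
        obtain rest where psa: "ps C R \<alpha> = p0 # rest" using matched_ps[OF CR mz] unfolding \<alpha>_def by blast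
        have "\<alpha> ! p0 = z ! p0" unfolding \<alpha>_def using pq by simp
        then have tka: "tk C R n cf \<alpha> = i" using tk_ps[OF psa] i_def by simp
        have "ord' \<alpha> a (z ! q0)" unfolding ord'_eq tka modo_def Xf_def
          using mP(3) a_def zq pq(4) i(1) by simp
        moreover have "u = \<alpha> @ a # (x @ zz)" unfolding u_def by simp
        moreover have "z = \<alpha> @ (z ! q0) # drop (Suc q0) z" unfolding \<alpha>_def by (rule id_take_nth_drop[OF pq(2)])
        ultimately have le: "ctx_le ord' u z" unfolding ctx_le_def by blast
        have "u ! q0 = a" unfolding u_def \<alpha>_def using pq by (simp add: nth_append)
        then have "u \<noteq> z" using mP(3) a_def zq by auto
        then show False using M[OF uL tr le] by simp
      qed
      have mn: "\<And>u. u \<in> wn_shuffle C R n Comp P \<Longrightarrow> trace_eq n Comp u z \<Longrightarrow> ctx_le ord u z \<Longrightarrow> u = z"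
      proof (rule ccontr)
        fix u assume uL': "u \<in> wn_shuffle C R n Comp P" and tr: "trace_eq n Comp u z" and le: "ctx_le ord u z"
          and ne: "u \<noteq> z"
        have l: "length u = length z" by (rule trace_eq_length[OF tr])
        obtain k where k: "k < length u" "take k u = take k z" "ord (take k u) (u ! k) (z ! k)"
          using ctx_le_iff[OF st l] le ne by blast
        define \<alpha> where "\<alpha> = take k z"
        define b where "b = u ! k"
        define a where "a = z ! k"
        have oba: "ord \<alpha> b a" using k unfolding \<alpha>_def a_def b_def by simp
        have ba: "b \<noteq> a" using oba st st_irrefl by metis
        have uL: "u \<in> L" using uL' L'eq by simp
        have nle: "\<not> ctx_le ord' u z" using M[OF uL tr] ne by blast
        have "\<not> ord' \<alpha> b a"
        proof
          assume "ord' \<alpha> b a"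
          then have "ctx_le ord' u z" using ctx_le_iff[OF st' l] k unfolding \<alpha>_def a_def b_def by auto
          then show False using nle by simp
        qed
        then have oab: "ord' \<alpha> a b" using st_total[OF st'[rule_format, of \<alpha>] ba] by blast
        have Xb: "Xf R Comp n (tk C R n cf \<alpha>) b"
        proof (rule ccontr)
          assume nX: "\<not> Xf R Comp n (tk C R n cf \<alpha>) b"
          show False
          proof (cases "Xf R Comp n (tk C R n cf \<alpha>) a")
            case True then show False using oab nX unfolding ord'_eq modo_def by simp
          next
            case False
            then have "ord \<alpha> a b" using oab nX unfolding ord'_eq modo_def by simp
            then show False using oba st st_asym by metis
          qed
        qed
        then have X: "tk C R n cf \<alpha> < n" "b \<in> R" "b \<notin> Comp (tk C R n cf \<alpha>)" unfolding Xf_def by auto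
        obtain p rest where psa: "ps C R \<alpha> = p # rest"
          using X(1) by (cases "ps C R \<alpha>") (auto simp: tk_def)
        have tka: "tk C R n cf \<alpha> = cf (\<alpha> ! p)" by (rule tk_ps[OF psa])
        have mt: "matched C R (\<alpha> @ b # drop (Suc k) u) p (length \<alpha>)" by (rule matched_top[OF CR psa X(2)])
        have ueq: "\<alpha> @ b # drop (Suc k) u = u" unfolding \<alpha>_def b_def using k id_take_nth_drop by metis
        have la: "length \<alpha> = k" unfolding \<alpha>_def using k l by simp
        have "well_nested C R n Comp u" using uL' L'eq by simp
        then obtain k' where k': "k' < n" "u ! p \<in> Comp k'" "u ! k \<in> Comp k'"
          using mt ueq la unfolding well_nested_def by fastforce
        have "p < length \<alpha>" using ps_hd[OF CR psa] pending_lt by blast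
        then have "p < k" using la by simp
        then have "u ! p = \<alpha> ! p" unfolding \<alpha>_def using k(2) by (metis nth_take)
        then have "cf (\<alpha> ! p) = k'" using cfe k' by simp
        then show False using X(3) k'(3) tka b_def by simp
      qed
      show ?thesis unfolding red_def L'eq using zL wn mn L'eq by auto
    qed
    show ?thesis
    proof
      show "red n Comp ord' (shuffle n Comp P) \<subseteq> red n Comp ord (wn_shuffle C R n Comp P)"
        using A L_def by blast
    next
      show "red n Comp ord (wn_shuffle C R n Comp P) \<subseteq> red n Comp ord' (shuffle n Comp P)"
      proof
        fix w assume wr: "w \<in> red n Comp ord (wn_shuffle C R n Comp P)"
        have wL': "w \<in> wn_shuffle C R n Comp P"
          and Mw: "\<And>u. u \<in> wn_shuffle C R n Comp P \<Longrightarrow> trace_eq n Comp u w \<Longrightarrow> ctx_le ord u w \<Longrightarrow> u = w"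
          using wr unfolding red_def by auto
        have wL: "w \<in> L" using wL' L'eq by simp
        define E where "E = {x \<in> L. trace_eq n Comp x w}"
        have fE: "finite E"
        proof (rule finite_subset)
          show "E \<subseteq> {xs. set xs \<subseteq> UNIV \<and> length xs = length w}" unfolding E_def using trace_eq_length by blast
          show "finite {xs. set xs \<subseteq> (UNIV :: 'a set) \<and> length xs = length w}" by (rule finite_lists_length_eq) simp
        qed
        have wE: "w \<in> E" unfolding E_def trace_eq_def using wL by simp
        have lE: "\<forall>x\<in>E. length x = length w" unfolding E_def using trace_eq_length by blast
        obtain z where zE: "z \<in> E" and zm: "\<forall>x\<in>E. ctx_le ord' x z \<longrightarrow> x = z"
          using ctx_min_exists[OF st' fE _ lE] wE by blast
        have zw: "trace_eq n Comp z w" and zL: "z \<in> L" using zE unfolding E_def by auto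
        have zr: "z \<in> red n Comp ord' L"
          unfolding red_def
        proof (intro CollectI conjI ballI impI zL)
          fix u assume "u \<in> L" "trace_eq n Comp u z \<and> ctx_le ord' u z"
          then have "u \<in> E" unfolding E_def using zw trace_eq_trans by blast
          then show "u = z" using zm \<open>trace_eq n Comp u z \<and> ctx_le ord' u z\<close> by blast
        qed
        have zr2: "z \<in> red n Comp ord (wn_shuffle C R n Comp P)" using A[OF zr] .
        have zL': "z \<in> wn_shuffle C R n Comp P" and Mz: "\<And>u. u \<in> wn_shuffle C R n Comp P \<Longrightarrow> trace_eq n Comp u z \<Longrightarrow> ctx_le ord u z \<Longrightarrow> u = z"
          using zr2 unfolding red_def by auto
        have "z = w"
        proof -
          have l: "length z = length w" using trace_eq_length[OF zw] .
          from ctx_le_total[OF st l] show ?thesis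
          proof
            assume "ctx_le ord z w" then show ?thesis using Mw zL' zw by blast
          next
            assume "ctx_le ord w z" then show ?thesis using Mz wL' trace_eq_sym[OF zw] by metis
          qed
        qed
        then show "w \<in> red n Comp ord' (shuffle n Comp P)" using zr L_def by simp
      qed
    qed
  qed
  show ?thesis using coh vp' main by blast
qed


end
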